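(* Let $n\ge 1$ and $1\le p\le n$. Then the number of $\alpha\in\mathcal{OCT}_n$ with $h(\alpha)=p$ is $$F(n;p)=(n-p+1)\binom{n-1}{p-1}.$$
   Context: $X_n=\{1,2,\dots,n\}$ with its usual order; maps are written on the right ($x\alpha$). A map $\alpha:X_n\to X_n$ is order-preserving if $x\le y$ implies $x\alpha\le y\alpha$, and a contraction if $|x\alpha-y\alpha|\le|x-y|$ for all $x,y$. $\mathcal{OCT}_n$ is the set of all order-preserving contractions $X_n\to X_n$ (defined on all of $X_n$). Height $h(\alpha)=|\mathrm{Im}\,\alpha|$. *)

theory Defs
  imports Main "HOL-Library.FuncSet"
begin

text \<open>Full transformations of X_n = {1..n}, represented as extensional functions
  (value undefined outside {1..n}).\<close>

definition order_preserving :: "nat \<Rightarrow> (nat \<Rightarrow> nat) \<Rightarrow> bool" where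
  "order_preserving n f \<longleftrightarrow> (\<forall>x\<in>{1..n}. \<forall>y\<in>{1..n}. x \<le> y \<longrightarrow> f x \<le> f y)"

definition contraction :: "nat \<Rightarrow> (nat \<Rightarrow> nat) \<Rightarrow> bool" where
  "contraction n f \<longleftrightarrow> (\<forall>x\<in>{1..n}. \<forall>y\<in>{1..n}.
      \<bar>int (f x) - int (f y)\<bar> \<le> \<bar>int x - int y\<bar>)"

definition OCT :: "nat \<Rightarrow> (nat \<Rightarrow> nat) set" where
  "OCT n = {f \<in> {1..n} \<rightarrow>\<^sub>E {1..n}. order_preserving n f \<and> contraction n f}"

definition height :: "nat \<Rightarrow> (nat \<Rightarrow> nat) \<Rightarrow> nat" where
  "height n f = card (f ` {1..n})"

end

theory Submission
  imports Defs
begin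

lemma oct_PiE: "f \<in> OCT n \<Longrightarrow> f \<in> {1..n} \<rightarrow>\<^sub>E {1..n}"
  by (simp add: OCT_def)

lemma oct_step:
  assumes "f \<in> OCT n" "1 \<le> i" "i < n"
  shows "f (Suc i) = f i \<or> f (Suc i) = Suc (f i)"
proof -
  have o: "f i \<le> f (Suc i)" using assms unfolding OCT_def order_preserving_def by auto
  have c: "\<bar>int (f i) - int (f (Suc i))\<bar> \<le> \<bar>int i - int (Suc i)\<bar>"
    proof -
    have "i \<in> {1..n}" "Suc i \<in> {1..n}" using assms by auto
    then show ?thesis using assms(1) unfolding OCT_def contraction_def by blast
  qed
  show ?thesis using o c by arith
qed

lemma oct_mono:
  assumes "f \<in> OCT n" "x \<in> {1..n}" "y \<in> {1..n}" "x \<le> y"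
  shows "f x \<le> f y"
  using assms unfolding OCT_def order_preserving_def by auto

lemma set_step:
  "{i\<in>{1..<Suc m}. P i} = (if 1 \<le> m \<and> P m then insert m {i\<in>{1..<m}. P i} else {i\<in>{1..<m}. P i})"
  by (auto simp: less_Suc_eq)

lemma oct_val:
  assumes "f \<in> OCT n"
  shows "1 \<le> m \<Longrightarrow> m \<le> n \<Longrightarrow> f m = f 1 + card {i\<in>{1..<m}. f i \<noteq> f (Suc i)}"
proof (induction m)
  case 0 then show ?case by simp
next
  case (Suc m)
  show ?case
  proof (cases "m = 0")
    case True then show ?thesis by simp
  next
    case False
    then have IH: "f m = f 1 + card {i\<in>{1..<m}. f i \<noteq> f (Suc i)}" using Suc by auto
    have st: "f (Suc m) = f m \<or> f (Suc m) = Suc (f m)" using oct_step[OF assms, of m] False Suc by auto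
    show ?thesis
      unfolding set_step using IH st False by (auto simp: card_insert_if)
  qed
qed

lemma oct_card_img:
  assumes "f \<in> OCT n"
  shows "1 \<le> m \<Longrightarrow> m \<le> n \<Longrightarrow> card (f ` {1..m}) = Suc (card {i\<in>{1..<m}. f i \<noteq> f (Suc i)})"
proof (induction m)
  case 0 then show ?case by simp
next
  case (Suc m)
  show ?case
  proof (cases "m = 0")
    case True then show ?thesis by simp
  next
    case False
    then have IH: "card (f ` {1..m}) = Suc (card {i\<in>{1..<m}. f i \<noteq> f (Suc i)})" using Suc by auto
    have st: "f (Suc m) = f m \<or> f (Suc m) = Suc (f m)" using oct_step[OF assms, of m] False Suc by auto
    have img: "f ` {1..Suc m} = insert (f (Suc m)) (f ` {1..m})"
      by (auto simp: atLeastAtMostSuc_conv)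
    show ?thesis
    proof (cases "f m = f (Suc m)")
      case True
      then have "f (Suc m) \<in> f ` {1..m}" using False by (metis atLeastAtMost_iff image_eqI le_refl less_one not_le)
      then show ?thesis unfolding set_step img using IH True by (simp add: insert_absorb)
    next
      case ne: False
      have "f (Suc m) \<notin> f ` {1..m}"
      proof
        assume "f (Suc m) \<in> f ` {1..m}"
        then obtain x where x: "x \<in> {1..m}" "f x = f (Suc m)" by auto
        have "f x \<le> f m" using oct_mono[OF assms, of x m] x Suc by auto
        then show False using x st ne by auto
      qed
      then show ?thesis unfolding set_step img using IH ne False by (simp add: card_insert_if)
    qed
  qed
qed

definition cnt :: "nat set \<Rightarrow> nat \<Rightarrow> nat" where
  "cnt S x = card {i\<in>S. i < x}"

lemma cnt_Suc: "finite S \<Longrightarrow> cnt S (Suc i) = cnt S i + (if i \<in> S then 1 else 0)"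
proof -
  assume fin: "finite S"
  have "{j\<in>S. j < Suc i} = (if i \<in> S then insert i {j\<in>S. j < i} else {j\<in>S. j < i})"
    by (auto simp: less_Suc_eq)
  then show ?thesis using fin by (simp add: cnt_def)
qed

lemma cnt_mono: "finite S \<Longrightarrow> x \<le> y \<Longrightarrow> cnt S x \<le> cnt S y"
  unfolding cnt_def by (rule card_mono) auto

lemma cnt_lip: "finite S \<Longrightarrow> cnt S (x + d) \<le> cnt S x + d"
  by (induction d) (auto simp: cnt_Suc)

lemma cnt_le: "finite S \<Longrightarrow> cnt S x \<le> card S"
  unfolding cnt_def by (rule card_mono) auto

lemma cnt_1: "S \<subseteq> {1..<n} \<Longrightarrow> cnt S 1 = 0"
  unfolding cnt_def by auto

theorem corollary2p7:
  fixes n p :: nat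
  assumes "1 \<le> n" and "1 \<le> p" and "p \<le> n"
  shows "card {f \<in> OCT n. height n f = p} = (n - p + 1) * ((n - 1) choose (p - 1))"
proof -
  define A where "A = {f \<in> OCT n. height n f = p}"
  define B where "B = {1..n-p+1} \<times> {S. S \<subseteq> {1..<n} \<and> card S = p - 1}"
  define D where "D f = {i\<in>{1..<n}. f i \<noteq> f (Suc i)}" for f :: "nat \<Rightarrow> nat"
  define \<Phi> where "\<Phi> f = (f 1, D f)" for f :: "nat \<Rightarrow> nat"
  have cardB: "card B = (n - p + 1) * ((n - 1) choose (p - 1))"
    unfolding B_def card_cartesian_product by (simp add: n_subsets)
  have inj: "inj_on \<Phi> A"
  proof (rule inj_onI)
    fix f g assume f: "f \<in> A" and g: "g \<in> A" and e: "\<Phi> f = \<Phi> g"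
    have fo: "f \<in> OCT n" and go: "g \<in> OCT n" using f g by (auto simp: A_def)
    show "f = g"
    proof (rule extensionalityI[of _ "{1..n}"])
      show "f \<in> extensional {1..n}" "g \<in> extensional {1..n}"
        using oct_PiE[OF fo] oct_PiE[OF go] by (auto simp: PiE_iff)
      fix x assume x: "x \<in> {1..n}"
      have a: "f 1 = g 1" and d: "D f = D g" using e by (auto simp: \<Phi>_def)
      have "{i\<in>{1..<x}. f i \<noteq> f (Suc i)} = D f \<inter> {1..<x}"
        "{i\<in>{1..<x}. g i \<noteq> g (Suc i)} = D g \<inter> {1..<x}" using x by (auto simp: D_def)
      then show "f x = g x" using oct_val[OF fo, of x] oct_val[OF go, of x] x a d by auto
    qed
  qed
  have sub: "\<Phi> ` A \<subseteq> B"
  proof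
    fix y assume "y \<in> \<Phi> ` A"
    then obtain f where f: "f \<in> OCT n" "height n f = p" and y: "y = \<Phi> f" by (auto simp: A_def)
    have h: "Suc (card (D f)) = p" using oct_card_img[OF f(1), of n] assms f(2)
      by (simp add: height_def D_def)
    have fn: "f n = f 1 + card (D f)" using oct_val[OF f(1), of n] assms by (simp add: D_def)
    have "f n \<in> {1..n}" "f 1 \<in> {1..n}" using oct_PiE[OF f(1)] assms by (auto simp: PiE_iff)
    then show "y \<in> B" using h fn unfolding y \<Phi>_def B_def by (auto simp: D_def)
  qed
  have sup: "B \<subseteq> \<Phi> ` A"
  proof
    fix y assume "y \<in> B"
    then obtain a S where y: "y = (a, S)" and a: "1 \<le> a" "a \<le> n - p + 1"
      and S: "S \<subseteq> {1..<n}" "card S = p - 1" by (auto simp: B_def)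
    have fin: "finite S" using S finite_subset by blast
    define g where "g = restrict (\<lambda>x. a + cnt S x) {1..n}"
    have gPi: "g \<in> {1..n} \<rightarrow>\<^sub>E {1..n}"
      unfolding g_def restrict_PiE_iff proof (intro ballI)
      fix x assume "x \<in> {1..n}"
      have "cnt S x \<le> p - 1" using cnt_le[OF fin, of x] S by simp
      then show "a + cnt S x \<in> {1..n}" using a assms by simp
    qed
    have gop: "order_preserving n g"
      unfolding order_preserving_def g_def using cnt_mono[OF fin] by auto
    have gc: "contraction n g"
      unfolding contraction_def
    proof (intro ballI)
      fix x y assume x: "x \<in> {1..n}" and yy: "y \<in> {1..n}"
      have "x \<le> y \<Longrightarrow> cnt S y \<le> cnt S x + (y - x)" using cnt_lip[OF fin, of x "y - x"] by simp
      moreover have "y \<le> x \<Longrightarrow> cnt S x \<le> cnt S y + (x - y)" using cnt_lip[OF fin, of y "x - y"] by simp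
      moreover have "x \<le> y \<Longrightarrow> cnt S x \<le> cnt S y" "y \<le> x \<Longrightarrow> cnt S y \<le> cnt S x"
        using cnt_mono[OF fin] by auto
      ultimately show "\<bar>int (g x) - int (g y)\<bar> \<le> \<bar>int x - int y\<bar>"
        using x yy unfolding g_def by (cases "x \<le> y") auto
    qed
    have gO: "g \<in> OCT n" using gPi gop gc by (simp add: OCT_def)
    have DS: "D g = S"
    proof -
      have "\<And>i. i \<in> {1..<n} \<Longrightarrow> (g i \<noteq> g (Suc i)) = (i \<in> S)"
        unfolding g_def using cnt_Suc[OF fin] by auto
      then show ?thesis using S unfolding D_def by blast
    qed
    have g1: "g 1 = a" using assms cnt_1[OF S(1)] by (simp add: g_def)
    have hg: "height n g = p"
      using oct_card_img[OF gO, of n] assms DS S by (simp add: height_def D_def)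
    show "y \<in> \<Phi> ` A"
      unfolding y A_def using gO hg DS g1 by (auto simp: \<Phi>_def intro!: image_eqI[of _ _ g])
  qed
  have "card A = card B"
    using inj sub sup by (metis card_image subset_antisym)
  then show ?thesis using cardB by (simp add: A_def)
qed

end
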